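(* Let $A,B,C$ be real random variables on a common probability space with finite second moments, $\mathrm{Var}(B)>0$, $\mathbb{E}[A]\neq0$, $\mathbb{E}[C]\neq 0$, and set $R=\mathbb{E}[A]/\mathbb{E}[C]$. Let $n\ge1$ and let $(A_i,B_i,C_i)_{i=1,\dots,n}$ be i.i.d. copies of $(A,B,C)$. For $\alpha\in\mathbb{R}$ put $N_\alpha=\overline{A_n}+\alpha(\mathbb{E}[B]-\overline{B_n})$, and let $\alpha_o'=\frac{\mathrm{Cov}(A,B)-R\,\mathrm{Cov}(B,C)}{\mathrm{Var}(B)}$. Then $$\Phi(N_{\alpha_o'},\overline{C_n})-\Phi(\overline{A_n},\overline{C_n})=-\frac{1}{n\,\mathbb{E}[C]^2}\,\frac{\big(\mathrm{Cov}(A,B)-R\,\mathrm{Cov}(B,C)\big)^2}{\mathrm{Var}(B)}\le 0 .$$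
   Context: For a random variable $X$, $\overline{X_n}=\frac1n\sum_{i=1}^n X_i$ denotes the sample mean of the i.i.d. copies $X_1,\dots,X_n$. For real random variables $X,Z$ with finite second moments and $\mathbb{E}[Z]\neq0$, define the first-order (delta-method) approximation of the variance of the ratio $X/Z$: $$\Phi(X,Z)=\frac{\mathrm{Var}(X)}{\mathbb{E}[Z]^2}+\frac{\mathbb{E}[X]^2}{\mathbb{E}[Z]^4}\mathrm{Var}(Z)-2\frac{\mathbb{E}[X]}{\mathbb{E}[Z]^3}\mathrm{Cov}(X,Z).$$ $\Phi(N_\alpha,\overline{C_n})$ is the paper's variance of the CV/MC estimator $N_\alpha/\overline{C_n}$ of $R$, and $\Phi(\overline{A_n},\overline{C_n})$ that of the Monte Carlo ratio estimator $\overline{A_n}/\overline{C_n}$; $\mathbb{E}[B]$ is a known constant. *)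

theory Defs
  imports "HOL-Probability.Probability"
begin

definition cov :: "'a measure \<Rightarrow> ('a \<Rightarrow> real) \<Rightarrow> ('a \<Rightarrow> real) \<Rightarrow> real" where
  "cov M X Z = integral\<^sup>L M (\<lambda>x. (X x - integral\<^sup>L M X) * (Z x - integral\<^sup>L M Z))"

definition sample_mean :: "nat \<Rightarrow> (nat \<Rightarrow> 'a \<Rightarrow> real) \<Rightarrow> 'a \<Rightarrow> real" where
  "sample_mean n X = (\<lambda>x. (\<Sum>i<n. X i x) / real n)"

text \<open>First-order (delta-method) approximation of the variance of X/Z.\<close>
definition Phi :: "'a measure \<Rightarrow> ('a \<Rightarrow> real) \<Rightarrow> ('a \<Rightarrow> real) \<Rightarrow> real" where
  "Phi M X Z =
     prob_space.variance M X / (prob_space.expectation M Z)^2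
   + (prob_space.expectation M X)^2 / (prob_space.expectation M Z)^4 * prob_space.variance M Z
   - 2 * prob_space.expectation M X / (prob_space.expectation M Z)^3 * cov M X Z"

end

theory Submission
  imports Defs
begin

definition L2 :: "'a measure \<Rightarrow> ('a \<Rightarrow> real) \<Rightarrow> bool" where
  "L2 M X \<longleftrightarrow> X \<in> borel_measurable M \<and> integrable M (\<lambda>x. (X x)^2)"

context prob_space begin

lemma L2_int: "L2 M X \<Longrightarrow> integrable M X"
  unfolding L2_def by (auto intro: square_integrable_imp_integrable)

lemma L2_mult_int: assumes "L2 M X" "L2 M Y" shows "integrable M (\<lambda>x. X x * Y x)"
proof (rule Bochner_Integration.integrable_bound[where f="\<lambda>x. X x^2 + Y x^2"])
  show "integrable M (\<lambda>x. X x^2 + Y x^2)" using assms unfolding L2_def by auto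
  show "(\<lambda>x. X x * Y x) \<in> borel_measurable M" using assms unfolding L2_def by auto
  show "AE x in M. norm (X x * Y x) \<le> norm (X x^2 + Y x^2)"
  proof (intro AE_I2)
    fix x
    have h: "2 * \<bar>X x\<bar> * \<bar>Y x\<bar> \<le> \<bar>X x\<bar>^2 + \<bar>Y x\<bar>^2"
      by (rule sum_squares_bound)
    have "0 \<le> \<bar>X x\<bar> * \<bar>Y x\<bar>" by simp
    moreover have "\<bar>X x * Y x\<bar> = \<bar>X x\<bar> * \<bar>Y x\<bar>" by (simp add: abs_mult)
    moreover have "\<bar>X x\<bar>^2 = X x^2" "\<bar>Y x\<bar>^2 = Y x^2" by simp_all
    ultimately have "\<bar>X x * Y x\<bar> \<le> X x^2 + Y x^2"
      using h by linarith
    then show "norm (X x * Y x) \<le> norm (X x^2 + Y x^2)" by simp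
  qed
qed

lemma L2_add: assumes "L2 M X" "L2 M Y" shows "L2 M (\<lambda>x. X x + Y x)"
proof -
  have e: "(\<lambda>x. (X x + Y x)^2) = (\<lambda>x. X x^2 + 2 * (X x * Y x) + Y x^2)"
    by (simp add: power2_eq_square algebra_simps)
  show ?thesis using assms L2_mult_int[OF assms] unfolding L2_def e by auto
qed

lemma L2_scale: assumes "L2 M X" shows "L2 M (\<lambda>x. c * X x)"
proof -
  have e: "(\<lambda>x. (c * X x)^2) = (\<lambda>x. c^2 * X x^2)" by (simp add: power_mult_distrib)
  show ?thesis using assms unfolding L2_def e by auto
qed

lemma L2_const: "L2 M (\<lambda>x. c)"
  unfolding L2_def by auto

lemma L2_diff: assumes "L2 M X" "L2 M Y" shows "L2 M (\<lambda>x. X x - Y x)"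
  using L2_add[OF assms(1) L2_scale[OF assms(2), of "-1"]] by simp

lemma L2_lin: assumes "L2 M X" "L2 M Y" shows "L2 M (\<lambda>x. X x + a * (k - Y x))"
  using L2_add[OF assms(1) L2_scale[OF L2_diff[OF L2_const assms(2)], of a]] by simp

lemma L2_sum: "finite I \<Longrightarrow> (\<And>i. i \<in> I \<Longrightarrow> L2 M (X i)) \<Longrightarrow> L2 M (\<lambda>x. \<Sum>i\<in>I. X i x)"
proof (induction I rule: finite_induct)
  case empty then show ?case using L2_const[of 0] by simp
next
  case (insert a F) then show ?case using L2_add[of "X a" "\<lambda>x. \<Sum>i\<in>F. X i x"] by simp
qed

lemma L2_div: assumes "L2 M X" shows "L2 M (\<lambda>x. X x / c)"
  using L2_scale[OF assms, of "1/c"] by simp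

lemma cov_eq: assumes "L2 M X" "L2 M Z"
  shows "cov M X Z = expectation (\<lambda>x. X x * Z x) - expectation X * expectation Z"
proof -
  let ?a = "expectation X" and ?c = "expectation Z"
  have e: "(\<lambda>x. (X x - ?a) * (Z x - ?c)) = (\<lambda>x. X x * Z x - ?c * X x - ?a * Z x + ?a * ?c)"
    by (simp add: algebra_simps)
  have i: "integrable M X" "integrable M Z" "integrable M (\<lambda>x. X x * Z x)"
    using assms L2_int L2_mult_int by auto
  show ?thesis unfolding cov_def e using i prob_space by simp
qed

lemma cov_sym: "cov M X Z = cov M Z X"
  unfolding cov_def by (simp add: mult.commute)

lemma var_cov: "variance X = cov M X X"
  unfolding cov_def by (simp add: power2_eq_square)

lemma cov_lin: assumes "L2 M X" "L2 M Y" "L2 M Z"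
  shows "cov M (\<lambda>x. X x + a * (k - Y x)) Z = cov M X Z - a * cov M Y Z"
proof -
  have e: "(\<lambda>x. (X x + a * (k - Y x)) * Z x) = (\<lambda>x. X x * Z x + (a*k) * Z x - a * (Y x * Z x))"
    by (simp add: algebra_simps)
  have e2: "(\<lambda>x. X x + a * (k - Y x)) = (\<lambda>x. X x + a * k - a * Y x)"
    by (simp add: algebra_simps)
  have i: "integrable M X" "integrable M Y" "integrable M Z" "integrable M (\<lambda>x. X x * Z x)"
     "integrable M (\<lambda>x. Y x * Z x)"
    using assms L2_int L2_mult_int by auto
  have "expectation (\<lambda>x. (X x + a * (k - Y x)) * Z x) = expectation (\<lambda>x. X x * Z x) + a*k* expectation Z - a * expectation (\<lambda>x. Y x * Z x)"
    unfolding e using i by simp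
  moreover have "expectation (\<lambda>x. X x + a * (k - Y x)) = expectation X + a*k - a * expectation Y"
    unfolding e2 using i prob_space by simp
  moreover note cov_eq[OF L2_lin[OF assms(1,2), of a k] assms(3)] cov_eq[OF assms(1,3)] cov_eq[OF assms(2,3)]
  ultimately show ?thesis
    by (simp only:) (simp add: algebra_simps)
qed

end

context prob_space begin

lemma transfer_iid:
  fixes T :: "'a \<Rightarrow> real \<times> real \<times> real" and T0
  assumes "T0 \<in> borel_measurable M" "T \<in> borel_measurable M"
    "distr M borel T = distr M borel T0" "h \<in> borel_measurable borel"
  shows "integrable M (\<lambda>x. h (T x)) = integrable M (\<lambda>x. (h (T0 x)::real))"
    "expectation (\<lambda>x. h (T x)) = expectation (\<lambda>x. h (T0 x))"
proof -
  show "integrable M (\<lambda>x. h (T x)) = integrable M (\<lambda>x. (h (T0 x)::real))"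
    using integrable_distr_eq[OF assms(2,4)] integrable_distr_eq[OF assms(1,4)] assms(3) by simp
  show "expectation (\<lambda>x. h (T x)) = expectation (\<lambda>x. h (T0 x))"
    using integral_distr[OF assms(2,4)] integral_distr[OF assms(1,4)] assms(3) by simp
qed

lemma L2_iid:
  fixes T :: "'a \<Rightarrow> real \<times> real \<times> real" and T0
  assumes "T0 \<in> borel_measurable M" "T \<in> borel_measurable M"
    "distr M borel T = distr M borel T0" "f \<in> borel_measurable borel"
    "integrable M (\<lambda>x. f (T0 x)^2)"
  shows "L2 M (\<lambda>x. f (T x))"
proof -
  have "(\<lambda>u. f u ^ 2) \<in> borel_measurable borel" using assms(4) by measurable
  then show ?thesis using transfer_iid(1)[OF assms(1-3), of "\<lambda>u. f u ^ 2"] assms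
    unfolding L2_def by auto
qed

lemma indep_prod:
  fixes T :: "nat \<Rightarrow> 'a \<Rightarrow> real \<times> real \<times> real"
  assumes ind: "indep_vars (\<lambda>_. borel) T I" and ij: "i \<in> I" "j \<in> I" "i \<noteq> j"
    and f: "f \<in> borel_measurable borel" and g: "g \<in> borel_measurable borel"
    and fi: "L2 M (\<lambda>x. f (T i x))" and gi: "L2 M (\<lambda>x. g (T j x))"
  shows "expectation (\<lambda>x. f (T i x) * g (T j x)) = expectation (\<lambda>x. f (T i x)) * expectation (\<lambda>x. g (T j x))"
proof -
  have r: "indep_var (PiM {i} (\<lambda>_. borel)) (\<lambda>\<omega>. restrict (\<lambda>k. T k \<omega>) {i})
                 (PiM {j} (\<lambda>_. borel)) (\<lambda>\<omega>. restrict (\<lambda>k. T k \<omega>) {j})"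
    using indep_var_restrict[OF ind, of "{i}" "{j}"] ij by auto
  have m1: "(\<lambda>F. f (F i)) \<in> measurable (PiM {i} (\<lambda>_. borel)) borel"
    using f by measurable
  have m2: "(\<lambda>F. g (F j)) \<in> measurable (PiM {j} (\<lambda>_. borel)) borel"
    using g by measurable
  have "indep_var borel ((\<lambda>F. f (F i)) \<circ> (\<lambda>\<omega>. restrict (\<lambda>k. T k \<omega>) {i}))
                  borel ((\<lambda>F. g (F j)) \<circ> (\<lambda>\<omega>. restrict (\<lambda>k. T k \<omega>) {j}))"
    by (rule indep_var_compose[OF r m1 m2])
  then have iv: "indep_var borel (\<lambda>x. f (T i x)) borel (\<lambda>x. g (T j x))"
    by (simp add: comp_def)
  show ?thesis
    by (rule indep_var_lebesgue_integral[OF iv L2_int[OF fi] L2_int[OF gi]])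
qed

end

context prob_space begin

lemma sm_facts:
  fixes T :: "nat \<Rightarrow> 'a \<Rightarrow> real \<times> real \<times> real" and T0
  assumes T0: "T0 \<in> borel_measurable M" and T: "\<And>i. i < n \<Longrightarrow> T i \<in> borel_measurable M"
    and ind: "indep_vars (\<lambda>_. borel) T {..<n}"
    and d: "\<And>i. i < n \<Longrightarrow> distr M borel (T i) = distr M borel T0"
    and f: "f \<in> borel_measurable borel" and g: "g \<in> borel_measurable borel"
    and fi: "integrable M (\<lambda>x. f (T0 x)^2)" and gi: "integrable M (\<lambda>x. g (T0 x)^2)"
    and n: "n \<ge> 1"
  shows "L2 M (sample_mean n (\<lambda>i x. f (T i x)))"
    "expectation (sample_mean n (\<lambda>i x. f (T i x))) = expectation (\<lambda>x. f (T0 x))"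
    "cov M (sample_mean n (\<lambda>i x. f (T i x))) (sample_mean n (\<lambda>i x. g (T i x)))
       = cov M (\<lambda>x. f (T0 x)) (\<lambda>x. g (T0 x)) / real n"
proof -
  have Lf: "\<And>i. i < n \<Longrightarrow> L2 M (\<lambda>x. f (T i x))"
    using L2_iid[OF T0 T d f fi] by blast
  have Lg: "\<And>i. i < n \<Longrightarrow> L2 M (\<lambda>x. g (T i x))"
    using L2_iid[OF T0 T d g gi] by blast
  have Lf0: "L2 M (\<lambda>x. f (T0 x))" using L2_iid[OF T0 T0 refl f fi] .
  have Lg0: "L2 M (\<lambda>x. g (T0 x))" using L2_iid[OF T0 T0 refl g gi] .
  have Ef: "\<And>i. i < n \<Longrightarrow> expectation (\<lambda>x. f (T i x)) = expectation (\<lambda>x. f (T0 x))"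
    using transfer_iid(2)[OF T0 T d f] by blast
  have Eg: "\<And>i. i < n \<Longrightarrow> expectation (\<lambda>x. g (T i x)) = expectation (\<lambda>x. g (T0 x))"
    using transfer_iid(2)[OF T0 T d g] by blast
  show L: "L2 M (sample_mean n (\<lambda>i x. f (T i x)))"
    unfolding sample_mean_def by (rule L2_div, rule L2_sum) (auto intro: Lf)
  have Lgs: "L2 M (sample_mean n (\<lambda>i x. g (T i x)))"
    unfolding sample_mean_def by (rule L2_div, rule L2_sum) (auto intro: Lg)
  have ES: "\<And>h. (\<And>i. i < n \<Longrightarrow> L2 M (\<lambda>x. h (T i x))) \<Longrightarrow>
      (\<And>i. i < n \<Longrightarrow> expectation (\<lambda>x. h (T i x)) = expectation (\<lambda>x. h (T0 x))) \<Longrightarrow>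
      expectation (sample_mean n (\<lambda>i x. h (T i x))) = expectation (\<lambda>x. h (T0 x))"
  proof -
    fix h assume a: "\<And>i. i < n \<Longrightarrow> L2 M (\<lambda>x. h (T i x))"
      "\<And>i. i < n \<Longrightarrow> expectation (\<lambda>x. h (T i x)) = expectation (\<lambda>x. h (T0 x))"
    have "expectation (sample_mean n (\<lambda>i x. h (T i x))) = (\<Sum>i<n. expectation (\<lambda>x. h (T i x))) / real n"
      unfolding sample_mean_def using a(1) L2_int by (simp add: integral_sum)
    also have "\<dots> = expectation (\<lambda>x. h (T0 x))" using a(2) n by simp
    finally show "expectation (sample_mean n (\<lambda>i x. h (T i x))) = expectation (\<lambda>x. h (T0 x))" .
  qed
  show Esf: "expectation (sample_mean n (\<lambda>i x. f (T i x))) = expectation (\<lambda>x. f (T0 x))"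
    using ES[OF Lf Ef] .
  have Esg: "expectation (sample_mean n (\<lambda>i x. g (T i x))) = expectation (\<lambda>x. g (T0 x))"
    using ES[OF Lg Eg] .
  define P where "P = expectation (\<lambda>x. f (T0 x) * g (T0 x))"
  define Q where "Q = expectation (\<lambda>x. f (T0 x)) * expectation (\<lambda>x. g (T0 x))"
  have fg: "(\<lambda>u. f u * g u) \<in> borel_measurable borel" using f g by measurable
  have pair: "expectation (\<lambda>x. f (T i x) * g (T j x)) = Q + (if i = j then P - Q else 0)"
    if "i < n" "j < n" for i j
  proof (cases "i = j")
    case True
    then show ?thesis using transfer_iid(2)[OF T0 T[OF that(1)] d[OF that(1)] fg]
      unfolding P_def by simp
  next
    case False
    then show ?thesis using indep_prod[OF ind _ _ False f g Lf[OF that(1)] Lg[OF that(2)]] that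
      Ef[OF that(1)] Eg[OF that(2)] unfolding Q_def by simp
  qed
  have inner: "(\<Sum>j<n. expectation (\<lambda>x. f (T i x) * g (T j x))) = real n * Q + (P - Q)"
    if "i < n" for i
  proof -
    have "(\<Sum>j<n. expectation (\<lambda>x. f (T i x) * g (T j x))) = (\<Sum>j<n. Q + (if i = j then P - Q else 0))"
      using pair that by (intro sum.cong) auto
    also have "\<dots> = real n * Q + (P - Q)" using that by (simp add: sum.distrib)
    finally show ?thesis .
  qed
  have prodeq: "(\<lambda>x. sample_mean n (\<lambda>i x. f (T i x)) x * sample_mean n (\<lambda>i x. g (T i x)) x)
     = (\<lambda>x. (\<Sum>i<n. \<Sum>j<n. f (T i x) * g (T j x)) / (real n)^2)"
    unfolding sample_mean_def by (simp add: sum_product power2_eq_square)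
  have "expectation (\<lambda>x. sample_mean n (\<lambda>i x. f (T i x)) x * sample_mean n (\<lambda>i x. g (T i x)) x)
      = (\<Sum>i<n. \<Sum>j<n. expectation (\<lambda>x. f (T i x) * g (T j x))) / (real n)^2"
  proof -
    have ii: "\<And>i j. i < n \<Longrightarrow> j < n \<Longrightarrow> integrable M (\<lambda>x. f (T i x) * g (T j x))"
      using L2_mult_int[OF Lf Lg] by blast
    have "expectation (\<lambda>x. \<Sum>i<n. \<Sum>j<n. f (T i x) * g (T j x))
       = (\<Sum>i<n. expectation (\<lambda>x. \<Sum>j<n. f (T i x) * g (T j x)))"
      by (rule Bochner_Integration.integral_sum[where f="\<lambda>i x. \<Sum>j<n. f (T i x) * g (T j x)"]) (auto intro!: integrable_sum ii)
    also have "\<dots> = (\<Sum>i<n. \<Sum>j<n. expectation (\<lambda>x. f (T i x) * g (T j x)))"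
      by (intro sum.cong refl) (rule Bochner_Integration.integral_sum[where f="\<lambda>j x. f (T _ x) * g (T j x)"], auto intro!: ii)
    finally show ?thesis unfolding prodeq by simp
  qed
  also have "\<dots> = (\<Sum>i<n. real n * Q + (P - Q)) / (real n)^2"
    using inner by simp
  also have "\<dots> = Q + (P - Q) / real n" using n by (simp add: power2_eq_square field_simps)
  finally have Eprod: "expectation (\<lambda>x. sample_mean n (\<lambda>i x. f (T i x)) x * sample_mean n (\<lambda>i x. g (T i x)) x)
      = Q + (P - Q) / real n" .
  show "cov M (sample_mean n (\<lambda>i x. f (T i x))) (sample_mean n (\<lambda>i x. g (T i x)))
       = cov M (\<lambda>x. f (T0 x)) (\<lambda>x. g (T0 x)) / real n"
    unfolding cov_eq[OF L Lgs] cov_eq[OF Lf0 Lg0] Eprod Esf Esg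
    unfolding P_def Q_def by simp
qed

end

lemma alg:
  fixes VA VC KAB KBC KAC VB a c nn :: real
  assumes "c \<noteq> 0" "VB > 0" "nn > 0"
  shows "let al = (KAB - a / c * KBC) / VB in
    ((VA/nn - al*(KAB/nn)) - al*(KAB/nn - al*(VB/nn))) / c^2 + a^2 / c^4 * (VC/nn)
     - 2 * a / c^3 * (KAC/nn - al*(KBC/nn))
    - ((VA/nn) / c^2 + a^2 / c^4 * (VC/nn) - 2 * a / c^3 * (KAC/nn))
   = - (1 / (nn * c^2)) * ((KAB - a / c * KBC)^2 / VB)"
proof -
  define K where "K = KAB - a / c * KBC"
  define al where "al = K / VB"
  have c3: "2 * a / c^3 = (2 * (a / c)) / c^2" using assms(1) by (simp add: power2_eq_square power3_eq_cube)
  have "((VA/nn - al*(KAB/nn)) - al*(KAB/nn - al*(VB/nn))) / c^2 + a^2 / c^4 * (VC/nn)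
     - 2 * a / c^3 * (KAC/nn - al*(KBC/nn))
    - ((VA/nn) / c^2 + a^2 / c^4 * (VC/nn) - 2 * a / c^3 * (KAC/nn))
    = (al * (al * VB - 2 * (KAB - a / c * KBC))) / (nn * c^2)"
    unfolding c3 using assms by (simp add: field_simps)
  also have "al * VB = K" unfolding al_def using assms by simp
  finally show ?thesis unfolding Let_def K_def[symmetric] al_def[symmetric]
    using assms by (simp add: al_def field_simps power2_eq_square)
qed

theorem mainTheorem4:
  fixes M :: "'a measure"
    and A B C :: "'a \<Rightarrow> real"
    and As Bs Cs :: "nat \<Rightarrow> 'a \<Rightarrow> real"
    and n :: nat
  assumes "prob_space M"
    and "A \<in> borel_measurable M" and "B \<in> borel_measurable M" and "C \<in> borel_measurable M"
    and "integrable M (\<lambda>x. (A x)^2)" and "integrable M (\<lambda>x. (B x)^2)"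
    and "integrable M (\<lambda>x. (C x)^2)"
    and "prob_space.variance M B > 0"
    and "prob_space.expectation M A \<noteq> 0"
    and "prob_space.expectation M C \<noteq> 0"
    and "n \<ge> 1"
    and "\<And>i. i < n \<Longrightarrow> As i \<in> borel_measurable M"
    and "\<And>i. i < n \<Longrightarrow> Bs i \<in> borel_measurable M"
    and "\<And>i. i < n \<Longrightarrow> Cs i \<in> borel_measurable M"
    and "prob_space.indep_vars M (\<lambda>_. borel) (\<lambda>i x. (As i x, Bs i x, Cs i x)) {..<n}"
    and "\<And>i. i < n \<Longrightarrow>
           distr M borel (\<lambda>x. (As i x, Bs i x, Cs i x)) = distr M borel (\<lambda>x. (A x, B x, C x))"
  shows "let R = prob_space.expectation M A / prob_space.expectation M C;
             \<alpha>' = (cov M A B - R * cov M B C) / prob_space.variance M B;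
             N = (\<lambda>\<alpha> x. sample_mean n As x + \<alpha> * (prob_space.expectation M B - sample_mean n Bs x))
         in Phi M (N \<alpha>') (sample_mean n Cs) - Phi M (sample_mean n As) (sample_mean n Cs)
              = - (1 / (real n * (prob_space.expectation M C)^2))
                  * ((cov M A B - R * cov M B C)^2 / prob_space.variance M B)
            \<and> Phi M (N \<alpha>') (sample_mean n Cs) - Phi M (sample_mean n As) (sample_mean n Cs) \<le> 0"
proof -
  interpret prob_space M by fact
  define T where "T = (\<lambda>i x. (As i x, Bs i x, Cs i x))"
  define T0 where "T0 = (\<lambda>x. (A x, B x, C x))"
  have [measurable]: "A \<in> borel_measurable M" "B \<in> borel_measurable M" "C \<in> borel_measurable M"
    using assms by auto
  have T0m: "T0 \<in> borel_measurable M" unfolding T0_def by measurable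
  have Tm: "T i \<in> borel_measurable M" if "i < n" for i
  proof -
    have [measurable]: "As i \<in> borel_measurable M" "Bs i \<in> borel_measurable M" "Cs i \<in> borel_measurable M"
      using assms that by auto
    show ?thesis unfolding T_def by measurable
  qed
  have ind: "indep_vars (\<lambda>_. borel) T {..<n}" using assms(15) unfolding T_def .
  have d: "distr M borel (T i) = distr M borel T0" if "i < n" for i
    using assms(16)[OF that] unfolding T_def T0_def .
  define fA where "fA = (\<lambda>u::real\<times>real\<times>real. fst u)"
  define fB where "fB = (\<lambda>u::real\<times>real\<times>real. fst (snd u))"
  define fC where "fC = (\<lambda>u::real\<times>real\<times>real. snd (snd u))"
  have fm: "fA \<in> borel_measurable borel" "fB \<in> borel_measurable borel" "fC \<in> borel_measurable borel"
    unfolding fA_def fB_def fC_def by (intro borel_measurable_continuous_onI continuous_intros)+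
  have e0: "(\<lambda>x. fA (T0 x)) = A" "(\<lambda>x. fB (T0 x)) = B" "(\<lambda>x. fC (T0 x)) = C"
    unfolding fA_def fB_def fC_def T0_def by auto
  have es: "sample_mean n As = sample_mean n (\<lambda>i x. fA (T i x))"
    "sample_mean n Bs = sample_mean n (\<lambda>i x. fB (T i x))"
    "sample_mean n Cs = sample_mean n (\<lambda>i x. fC (T i x))"
    unfolding fA_def fB_def fC_def T_def by auto
  have sq: "integrable M (\<lambda>x. fA (T0 x)^2)" "integrable M (\<lambda>x. fB (T0 x)^2)"
    "integrable M (\<lambda>x. fC (T0 x)^2)"
    unfolding fA_def fB_def fC_def T0_def using assms by auto
  have F1: "L2 M (sample_mean n (\<lambda>i x. f (T i x)))"
    "expectation (sample_mean n (\<lambda>i x. f (T i x))) = expectation (\<lambda>x. f (T0 x))"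
    if "f \<in> borel_measurable borel" "integrable M (\<lambda>x. f (T0 x)^2)" for f
    by (rule sm_facts(1)[OF T0m _ ind _ that(1) that(1) that(2) that(2) assms(11)]; simp add: Tm d)+
       (rule sm_facts(2)[OF T0m _ ind _ that(1) that(1) that(2) that(2) assms(11)]; simp add: Tm d)+
  have F3: "cov M (sample_mean n (\<lambda>i x. f (T i x))) (sample_mean n (\<lambda>i x. g (T i x)))
       = cov M (\<lambda>x. f (T0 x)) (\<lambda>x. g (T0 x)) / real n"
    if "f \<in> borel_measurable borel" "g \<in> borel_measurable borel"
      "integrable M (\<lambda>x. f (T0 x)^2)" "integrable M (\<lambda>x. g (T0 x)^2)" for f g
    by (rule sm_facts(3)[OF T0m _ ind _ that assms(11)]; simp add: Tm d)
  define SA where "SA = sample_mean n As"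
  define SB where "SB = sample_mean n Bs"
  define SC where "SC = sample_mean n Cs"
  have LA: "L2 M SA" and EA: "expectation SA = expectation A"
    using F1[OF fm(1) sq(1)] unfolding SA_def es e0 by auto
  have LB: "L2 M SB" and EB: "expectation SB = expectation B"
    using F1[OF fm(2) sq(2)] unfolding SB_def es e0 by auto
  have LC: "L2 M SC" and EC: "expectation SC = expectation C"
    using F1[OF fm(3) sq(3)] unfolding SC_def es e0 by auto
  have cAA: "cov M SA SA = cov M A A / real n"
    using F3[OF fm(1) fm(1) sq(1) sq(1)] unfolding SA_def es e0 by auto
  have cAB: "cov M SA SB = cov M A B / real n"
    using F3[OF fm(1) fm(2) sq(1) sq(2)] unfolding SA_def SB_def es e0 by auto
  have cAC: "cov M SA SC = cov M A C / real n"
    using F3[OF fm(1) fm(3) sq(1) sq(3)] unfolding SA_def SC_def es e0 by auto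
  have cBB: "cov M SB SB = cov M B B / real n"
    using F3[OF fm(2) fm(2) sq(2) sq(2)] unfolding SB_def es e0 by auto
  have cBC: "cov M SB SC = cov M B C / real n"
    using F3[OF fm(2) fm(3) sq(2) sq(3)] unfolding SB_def SC_def es e0 by auto
  have cCC: "cov M SC SC = cov M C C / real n"
    using F3[OF fm(3) fm(3) sq(3) sq(3)] unfolding SC_def es e0 by auto
  define al where "al = (cov M A B - expectation A / expectation C * cov M B C) / variance B"
  define N where "N = (\<lambda>x. SA x + al * (expectation B - SB x))"
  have LN: "L2 M N" unfolding N_def by (rule L2_lin[OF LA LB])
  have EN: "expectation N = expectation A"
  proof -
    have "N = (\<lambda>x. SA x + al * expectation B - al * SB x)" unfolding N_def by (simp add: algebra_simps)
    then show ?thesis using L2_int[OF LA] L2_int[OF LB] EA EB prob_space by simp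
  qed
  have cNC: "cov M N SC = cov M A C / real n - al * (cov M B C / real n)"
    unfolding N_def cov_lin[OF LA LB LC] cAC cBC ..
  have cNA: "cov M N SA = cov M A A / real n - al * (cov M A B / real n)"
    unfolding N_def cov_lin[OF LA LB LA] cAA cov_sym[of SB SA] cAB ..
  have cNB: "cov M N SB = cov M A B / real n - al * (cov M B B / real n)"
    unfolding N_def cov_lin[OF LA LB LB] cAB cBB ..
  have cNN: "cov M N N = (cov M A A / real n - al * (cov M A B / real n))
       - al * (cov M A B / real n - al * (cov M B B / real n))"
  proof -
    have "cov M N N = cov M SA N - al * cov M SB N"
      using cov_lin[OF LA LB LN, of al "expectation B"] unfolding N_def .
    then show ?thesis unfolding cov_sym[of SA N] cov_sym[of SB N] cNA cNB .
  qed
  have nz: "expectation C \<noteq> 0" "variance B > 0" "real n > 0" using assms by auto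
  have VB: "cov M B B = variance B" by (simp add: var_cov)
  have key: "Phi M N SC - Phi M SA SC = - (1 / (real n * (expectation C)^2))
                  * ((cov M A B - expectation A / expectation C * cov M B C)^2 / variance B)"
  proof -
    have v: "variance N = cov M N N" "variance SA = cov M SA SA" "variance SC = cov M SC SC"
      by (rule var_cov)+
    show ?thesis
    unfolding Phi_def v unfolding cNN cNC cAA EN EA EC cCC cAC VB
    using alg[OF nz, where VA="cov M A A" and KAB="cov M A B" and a="expectation A" and KBC="cov M B C"
       and VC="cov M C C" and KAC="cov M A C"]
    unfolding Let_def al_def[symmetric] by simp
  qed
  have nonpos: "- (1 / (real n * (expectation C)^2))
                  * ((cov M A B - expectation A / expectation C * cov M B C)^2 / variance B) \<le> 0"
    using nz by (simp add: mult_nonneg_nonneg)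
  show ?thesis unfolding Let_def
    using key nonpos unfolding N_def SA_def SB_def SC_def al_def by simp
qed

end
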